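(* For every positive integer $n$, the set $I^n_{\mathfrak U}=\{\operatorname{is}(X): X\in\mathfrak U,\ |X|=n\}$ is an open dense subset of the space of isometry types of ultrametric spaces $(X,d)$ with $|X|\leqslant n$, endowed with the Gromov–Hausdorff metric.
   Context: $\operatorname{Sp}(X)=\{d(x,y):x\neq y\}$; $\mathfrak U$ is the class of finite ultrametric spaces $X$ with $|\operatorname{Sp}(X)|=|X|-1$. $\operatorname{is}(X)$ denotes the isometry type of $X$. For bounded metric spaces $X,Y$ and $\varepsilon>0$, $d_{GH}(\operatorname{is}(X),\operatorname{is}(Y))<\varepsilon$ iff there is a metric space $(Z,d_Z)$ with subspaces $X',Y'$ isometric to $X,Y$ such that each point of $X'$ lies at $d_Z$-distance $<\varepsilon$ from some point of $Y'$ and each point of $Y'$ lies at distance $<\varepsilon$ from some point of $X'$; $d_{GH}$ is a metric on isometry types of compact (in particular finite) metric spaces. *)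

theory Defs
  imports "HOL-Analysis.Analysis"
begin

definition ultrametric :: "'a set \<Rightarrow> ('a \<Rightarrow> 'a \<Rightarrow> real) \<Rightarrow> bool" where
  "ultrametric A d \<longleftrightarrow> Metric_space A d \<and>
     (\<forall>x\<in>A. \<forall>y\<in>A. \<forall>z\<in>A. d x y \<le> max (d x z) (d z y))"

definition Sp :: "'a set \<Rightarrow> ('a \<Rightarrow> 'a \<Rightarrow> real) \<Rightarrow> real set" where
  "Sp A d = {d x y | x y. x \<in> A \<and> y \<in> A \<and> x \<noteq> y}"

definition classU :: "'a set \<Rightarrow> ('a \<Rightarrow> 'a \<Rightarrow> real) \<Rightarrow> bool" where
  "classU A d \<longleftrightarrow> finite A \<and> A \<noteq> {} \<and> ultrametric A d \<and> card (Sp A d) = card A - 1"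

text \<open>d_GH(is(X), is(Y)) < eps: there is a metric space Z containing isometric copies of X and Y
  that are mutually eps-close. For finite X, Y one may restrict Z to the union of the two
  copies, which injects into the disjoint sum of the carrier types; hence taking the carrier
  of Z inside type 'a + 'b loses no generality.\<close>
definition gh_less :: "'a set \<Rightarrow> ('a \<Rightarrow> 'a \<Rightarrow> real) \<Rightarrow> 'b set \<Rightarrow> ('b \<Rightarrow> 'b \<Rightarrow> real) \<Rightarrow> real \<Rightarrow> bool" where
  "gh_less A d B e \<epsilon> \<longleftrightarrow>
     (\<exists>(Z :: ('a + 'b) set) dZ f g.
        Metric_space Z dZ \<and> f ` A \<subseteq> Z \<and> g ` B \<subseteq> Z \<and>
        (\<forall>x\<in>A. \<forall>y\<in>A. dZ (f x) (f y) = d x y) \<and>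
        (\<forall>x\<in>B. \<forall>y\<in>B. dZ (g x) (g y) = e x y) \<and>
        (\<forall>x\<in>A. \<exists>y\<in>B. dZ (f x) (g y) < \<epsilon>) \<and>
        (\<forall>y\<in>B. \<exists>x\<in>A. dZ (f x) (g y) < \<epsilon>))"

definition ultra_le :: "nat \<Rightarrow> 'a set \<Rightarrow> ('a \<Rightarrow> 'a \<Rightarrow> real) \<Rightarrow> bool" where
  "ultra_le n A d \<longleftrightarrow> finite A \<and> A \<noteq> {} \<and> ultrametric A d \<and> card A \<le> n"

end

theory Submission imports Defs begin

lemma ultra_metric: "ultrametric A d \<Longrightarrow> Metric_space A d"
  by (simp add: ultrametric_def)

lemma ultra_le': "ultrametric A d \<Longrightarrow> x\<in>A \<Longrightarrow> y\<in>A \<Longrightarrow> z\<in>A \<Longrightarrow> d x y \<le> max (d x z) (d z y)"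
  by (simp add: ultrametric_def)

lemma ultra_sub: "ultrametric A d \<Longrightarrow> A' \<subseteq> A \<Longrightarrow> ultrametric A' d"
  unfolding ultrametric_def using Metric_space.subspace by blast

lemma Sp_finite: "finite A \<Longrightarrow> finite (Sp A d)"
proof -
  assume "finite A"
  have "Sp A d \<subseteq> (\<lambda>(x,y). d x y) ` (A \<times> A)" unfolding Sp_def by auto
  then show ?thesis using \<open>finite A\<close> finite_subset by blast
qed

lemma Sp_bound:
  assumes "ultrametric A d" "finite A" shows "card (Sp A d) \<le> card A - 1"
  using assms
proof (induction "card A" arbitrary: A rule: less_induct)
  case less
  show ?case
  proof (cases "Sp A d = {}")
    case True then show ?thesis by simp
  next
    case False
    have fin: "finite (Sp A d)" by (rule Sp_finite[OF less.prems(2)])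
    define r where "r = Min (Sp A d)"
    have "r \<in> Sp A d" using Min_in fin False r_def by auto
    then obtain x y where xy: "x\<in>A" "y\<in>A" "x\<noteq>y" "d x y = r" unfolding Sp_def by auto
    have rmin: "r \<le> d u v" if "u\<in>A" "v\<in>A" "u\<noteq>v" for u v
    proof -
      have "d u v \<in> Sp A d" using that unfolding Sp_def by auto
      then show ?thesis using fin r_def by simp
    qed
    have M: "Metric_space A d" using less.prems ultra_metric by auto
    have eq: "d x z = d y z" if "z\<in>A" "z\<noteq>x" "z\<noteq>y" for z
    proof -
      have 1: "d x z \<le> max (d x y) (d y z)" using ultra_le'[OF less.prems(1)] xy that by auto
      have 2: "d y z \<le> max (d y x) (d x z)" using ultra_le'[OF less.prems(1)] xy that by auto
      have "r \<le> d y z" "r \<le> d x z" using rmin xy that by auto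
      moreover have "d y x = r" using xy Metric_space.commute[OF M] by metis
      ultimately show ?thesis using 1 2 xy by linarith
    qed
    have sub: "Sp A d \<subseteq> insert r (Sp (A - {x}) d)"
    proof
      fix s assume "s \<in> Sp A d"
      then obtain u v where uv: "u\<in>A" "v\<in>A" "u\<noteq>v" "s = d u v" unfolding Sp_def by auto
      show "s \<in> insert r (Sp (A - {x}) d)"
      proof (cases "u = x \<or> v = x")
        case False then show ?thesis using uv unfolding Sp_def by auto
      next
        case True
        then obtain w where w: "w \<in> A" "w \<noteq> x" "s = d x w"
          using uv Metric_space.commute[OF M] by metis
        show ?thesis
        proof (cases "w = y")
          case True then show ?thesis using w xy by simp
        next
          case False
          then have "s = d y w" using eq[of w] w Metric_space.commute[OF M] by metis
          then show ?thesis using False w xy unfolding Sp_def by auto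
        qed
      qed
    qed
    have "card (Sp A d) \<le> card (insert r (Sp (A - {x}) d))"
      by (rule card_mono) (use sub Sp_finite[of "A - {x}"] less.prems(2) in auto)
    also have "\<dots> \<le> Suc (card (Sp (A - {x}) d))" by (simp add: card_insert_le_m1 card_insert_if)
    also have "card (Sp (A - {x}) d) \<le> card (A - {x}) - 1"
      using less.hyps[of "A - {x}"] less.prems xy ultra_sub[of A d "A - {x}"]
      by (metis Diff_subset card_Diff1_less finite_Diff)
    finally have "card (Sp A d) \<le> Suc (card (A - {x}) - 1)" by simp
    moreover have "card (A - {x}) \<ge> 1" using xy less.prems(2)
      by (metis DiffI card_0_eq finite_Diff empty_iff less_one not_le singletonD)
    ultimately show ?thesis using xy less.prems(2) by (simp add: card_Diff_singleton)
  qed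
qed


lemma extend:
  assumes U: "ultrametric A d" and q: "q \<in> A" and p: "p \<notin> A" and c: "c > 0"
    and d'_def: "d' = (\<lambda>x y. if x = p \<and> y = p then 0 else if x = p then max (d q y) c
                      else if y = p then max (d q x) c else d x y)"
  shows "ultrametric (insert p A) d'" "insert c (Sp A d) \<subseteq> Sp (insert p A) d'"
    "\<And>x. x\<in>A \<Longrightarrow> d' p x = max (d q x) c" "\<And>x. x\<in>A \<Longrightarrow> d' x p = max (d q x) c"
    "\<And>x y. x\<in>A \<Longrightarrow> y\<in>A \<Longrightarrow> d' x y = d x y"
proof -
  have M: "Metric_space A d" using U ultra_metric by auto
  have com: "\<And>x y. d x y = d y x" using Metric_space.commute[OF M] by auto
  have nn: "\<And>x y. 0 \<le> d x y" using Metric_space.nonneg[OF M] by auto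
  have ul: "\<And>x y z. x\<in>A \<Longrightarrow> y\<in>A \<Longrightarrow> z\<in>A \<Longrightarrow> d x y \<le> max (d x z) (d z y)"
    using ultra_le'[OF U] by auto
  have z: "\<And>x y. x\<in>A \<Longrightarrow> y\<in>A \<Longrightarrow> d x y = 0 \<longleftrightarrow> x = y" using Metric_space.zero[OF M] by auto
  have pA: "\<And>x. x \<in> A \<Longrightarrow> x \<noteq> p" using p by auto
  show e1: "\<And>x. x\<in>A \<Longrightarrow> d' p x = max (d q x) c" unfolding d'_def using pA by auto
  show e2: "\<And>x. x\<in>A \<Longrightarrow> d' x p = max (d q x) c" unfolding d'_def using pA by auto
  show e3: "\<And>x y. x\<in>A \<Longrightarrow> y\<in>A \<Longrightarrow> d' x y = d x y" unfolding d'_def using pA by auto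
  have pp: "d' p p = 0" unfolding d'_def by simp
  have nn': "\<And>x y. 0 \<le> d' x y" unfolding d'_def using nn c by (auto simp: max_def)
  have com': "\<And>x y. d' x y = d' y x" unfolding d'_def using com by auto
  have ul': "d' x y \<le> max (d' x z) (d' z y)" if xyz: "x \<in> insert p A" "y \<in> insert p A" "z \<in> insert p A" for x y z
  proof -
    consider "x = p" "y = p" | "x = p" "y \<in> A" "z = p" | "x = p" "y \<in> A" "z \<in> A"
      | "x \<in> A" "y = p" "z = p" | "x \<in> A" "y = p" "z \<in> A"
      | "x \<in> A" "y \<in> A" "z = p" | "x \<in> A" "y \<in> A" "z \<in> A"
      using xyz by blast
    then show ?thesis
    proof cases
      case 1 then show ?thesis using pp nn' by (simp add: le_max_iff_disj)
    next
      case 2 then show ?thesis using pp nn' by (simp add: le_max_iff_disj)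
    next
      case 3
      have "d q y \<le> max (d q z) (d z y)" using ul q 3 by auto
      then show ?thesis using 3 e1 e3 by (auto simp: max_def split: if_splits)
    next
      case 4 then show ?thesis using pp nn' by (simp add: le_max_iff_disj)
    next
      case 5
      have "d q x \<le> max (d q z) (d z x)" using ul q 5 by auto
      then show ?thesis using 5 e1 e2 e3 com by (auto simp: max_def split: if_splits)
    next
      case 6
      have "d x y \<le> max (d x q) (d q y)" using ul q 6 by auto
      then show ?thesis using 6 e1 e2 e3 com by (auto simp: max_def split: if_splits)
    next
      case 7 then show ?thesis using ul e3 by auto
    qed
  qed
  show "ultrametric (insert p A) d'"
    unfolding ultrametric_def
  proof (intro conjI ballI)
    show "Metric_space (insert p A) d'"
    proof
      show "\<And>x y. 0 \<le> d' x y" by (rule nn')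
      show "\<And>x y. d' x y = d' y x" by (rule com')
      show "d' x y = 0 \<longleftrightarrow> x = y" if "x \<in> insert p A" "y \<in> insert p A" for x y
        using that z e1 e2 e3 pp c pA by (auto simp: max_def split: if_splits)
      show "d' x z \<le> d' x y + d' y z" if "x \<in> insert p A" "y \<in> insert p A" "z \<in> insert p A" for x y z
        using ul'[OF that(1) that(3) that(2)] nn'[of x y] nn'[of y z] by (simp add: max_def split: if_splits)
    qed
    show "\<And>x y z. x \<in> insert p A \<Longrightarrow> y \<in> insert p A \<Longrightarrow> z \<in> insert p A \<Longrightarrow> d' x y \<le> max (d' x z) (d' z y)"
      by (rule ul')
  qed
  show "insert c (Sp A d) \<subseteq> Sp (insert p A) d'"
  proof
    fix s assume "s \<in> insert c (Sp A d)"
    then show "s \<in> Sp (insert p A) d'"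
    proof
      assume "s = c"
      moreover have "d q q = 0" using z q by simp
      ultimately have "s = d' p q" using e1[OF q] c by simp
      then show ?thesis using q pA unfolding Sp_def by blast
    next
      assume "s \<in> Sp A d"
      then obtain x y where "x\<in>A" "y\<in>A" "x\<noteq>y" "s = d x y" unfolding Sp_def by auto
      then have "s = d' x y" "x \<in> insert p A" "y \<in> insert p A" using e3 by auto
      then show ?thesis using \<open>x \<noteq> y\<close> unfolding Sp_def by blast
    qed
  qed
qed

lemma gh_from_map:
  assumes MA: "Metric_space A d" and MB: "Metric_space B e" and im: "\<phi> ` A = B"
    and bd: "\<forall>x\<in>A. \<forall>y\<in>A. e (\<phi> x) (\<phi> y) \<le> d x y \<and> d x y \<le> e (\<phi> x) (\<phi> y) + \<epsilon>"
    and ep: "\<epsilon> > 0"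
  shows "gh_less A d B e \<epsilon>"
proof -
  define dZ :: "('a + 'b) \<Rightarrow> ('a + 'b) \<Rightarrow> real" where
    "dZ u v = (case u of Inl a \<Rightarrow> (case v of Inl a' \<Rightarrow> d a a' | Inr b \<Rightarrow> e (\<phi> a) b + \<epsilon>/2)
                  | Inr b \<Rightarrow> (case v of Inl a \<Rightarrow> e (\<phi> a) b + \<epsilon>/2 | Inr b' \<Rightarrow> e b b'))" for u v
  define Z :: "('a + 'b) set" where "Z = Inl ` A \<union> Inr ` B"
  have comA: "\<And>x y. d x y = d y x" using Metric_space.commute[OF MA] by auto
  have comB: "\<And>x y. e x y = e y x" using Metric_space.commute[OF MB] by auto
  have nnA: "\<And>x y. 0 \<le> d x y" using Metric_space.nonneg[OF MA] by auto
  have nnB: "\<And>x y. 0 \<le> e x y" using Metric_space.nonneg[OF MB] by auto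
  have trA: "\<And>x y z. x\<in>A \<Longrightarrow> y\<in>A \<Longrightarrow> z\<in>A \<Longrightarrow> d x z \<le> d x y + d y z"
    using Metric_space.triangle[OF MA] by auto
  have trB: "\<And>x y z. x\<in>B \<Longrightarrow> y\<in>B \<Longrightarrow> z\<in>B \<Longrightarrow> e x z \<le> e x y + e y z"
    using Metric_space.triangle[OF MB] by auto
  have zA: "\<And>x y. x\<in>A \<Longrightarrow> y\<in>A \<Longrightarrow> d x y = 0 \<longleftrightarrow> x = y" using Metric_space.zero[OF MA] by auto
  have zB: "\<And>x y. x\<in>B \<Longrightarrow> y\<in>B \<Longrightarrow> e x y = 0 \<longleftrightarrow> x = y" using Metric_space.zero[OF MB] by auto
  have phB: "\<And>x. x\<in>A \<Longrightarrow> \<phi> x \<in> B" using im by auto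
  have MZ: "Metric_space Z dZ"
  proof
    show "\<And>x y. 0 \<le> dZ x y" unfolding dZ_def using nnA nnB ep
      by (auto split: sum.split intro: add_nonneg_nonneg)
    show "\<And>x y. dZ x y = dZ y x" unfolding dZ_def using comA comB by (auto split: sum.split)
    show "dZ x y = 0 \<longleftrightarrow> x = y" if "x \<in> Z" "y \<in> Z" for x y
    proof -
      have pos: "e a b + \<epsilon>/2 \<noteq> 0" for a b using nnB[of a b] ep by linarith
      show ?thesis using that zA zB pos unfolding dZ_def Z_def
        by (auto split: sum.split)
    qed
    show "dZ x z \<le> dZ x y + dZ y z" if xyz: "x \<in> Z" "y \<in> Z" "z \<in> Z" for x y z
    proof -
      consider a1 where "x = Inl a1" "a1 \<in> A" | b1 where "x = Inr b1" "b1 \<in> B" using xyz(1) Z_def by auto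
      note cx = this
      consider a2 where "y = Inl a2" "a2 \<in> A" | b2 where "y = Inr b2" "b2 \<in> B" using xyz(2) Z_def by auto
      note cy = this
      consider a3 where "z = Inl a3" "a3 \<in> A" | b3 where "z = Inr b3" "b3 \<in> B" using xyz(3) Z_def by auto
      note cz = this
      show ?thesis
      proof (cases rule: cx; cases rule: cy; cases rule: cz)
        fix a1 a2 a3 assume "x = Inl a1" "a1 \<in> A" "y = Inl a2" "a2 \<in> A" "z = Inl a3" "a3 \<in> A"
        then show ?thesis unfolding dZ_def using trA by simp
      next
        fix a1 a2 b3 assume h: "x = Inl a1" "a1 \<in> A" "y = Inl a2" "a2 \<in> A" "z = Inr b3" "b3 \<in> B"
        have "e (\<phi> a1) b3 \<le> e (\<phi> a1) (\<phi> a2) + e (\<phi> a2) b3" using trB phB h by auto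
        then show ?thesis unfolding dZ_def using h bd by fastforce
      next
        fix a1 b2 a3 assume h: "x = Inl a1" "a1 \<in> A" "y = Inr b2" "b2 \<in> B" "z = Inl a3" "a3 \<in> A"
        have "e (\<phi> a1) (\<phi> a3) \<le> e (\<phi> a1) b2 + e b2 (\<phi> a3)" using trB phB h by auto
        then show ?thesis unfolding dZ_def using h bd comB by fastforce
      next
        fix a1 b2 b3 assume h: "x = Inl a1" "a1 \<in> A" "y = Inr b2" "b2 \<in> B" "z = Inr b3" "b3 \<in> B"
        have "e (\<phi> a1) b3 \<le> e (\<phi> a1) b2 + e b2 b3" using trB phB h by auto
        then show ?thesis unfolding dZ_def using h by simp
      next
        fix b1 a2 a3 assume h: "x = Inr b1" "b1 \<in> B" "y = Inl a2" "a2 \<in> A" "z = Inl a3" "a3 \<in> A"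
        have "e b1 (\<phi> a3) \<le> e b1 (\<phi> a2) + e (\<phi> a2) (\<phi> a3)" using trB phB h by auto
        then show ?thesis unfolding dZ_def using h bd comB by fastforce
      next
        fix b1 a2 b3 assume h: "x = Inr b1" "b1 \<in> B" "y = Inl a2" "a2 \<in> A" "z = Inr b3" "b3 \<in> B"
        have "e b1 b3 \<le> e b1 (\<phi> a2) + e (\<phi> a2) b3" using trB phB h by auto
        then show ?thesis unfolding dZ_def using h comB ep by simp
      next
        fix b1 b2 a3 assume h: "x = Inr b1" "b1 \<in> B" "y = Inr b2" "b2 \<in> B" "z = Inl a3" "a3 \<in> A"
        have "e b1 (\<phi> a3) \<le> e b1 b2 + e b2 (\<phi> a3)" using trB phB h by auto
        then show ?thesis unfolding dZ_def using h comB by simp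
      next
        fix b1 b2 b3 assume h: "x = Inr b1" "b1 \<in> B" "y = Inr b2" "b2 \<in> B" "z = Inr b3" "b3 \<in> B"
        then show ?thesis unfolding dZ_def using trB by simp
      qed
    qed
  qed
  show ?thesis unfolding gh_less_def
  proof (intro exI conjI)
    show "Metric_space Z dZ" by (rule MZ)
    show "Inl ` A \<subseteq> Z" "Inr ` B \<subseteq> Z" unfolding Z_def by auto
    show "\<forall>x\<in>A. \<forall>y\<in>A. dZ (Inl x) (Inl y) = d x y" unfolding dZ_def by simp
    show "\<forall>x\<in>B. \<forall>y\<in>B. dZ (Inr x) (Inr y) = e x y" unfolding dZ_def by simp
    show "\<forall>x\<in>A. \<exists>y\<in>B. dZ (Inl x) (Inr y) < \<epsilon>"
    proof
      fix x assume "x \<in> A"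
      then have "dZ (Inl x) (Inr (\<phi> x)) = \<epsilon>/2" unfolding dZ_def using zB phB by simp
      then show "\<exists>y\<in>B. dZ (Inl x) (Inr y) < \<epsilon>" using phB \<open>x\<in>A\<close> ep by force
    qed
    show "\<forall>y\<in>B. \<exists>x\<in>A. dZ (Inl x) (Inr y) < \<epsilon>"
    proof
      fix y assume "y \<in> B"
      then obtain x where "x \<in> A" "\<phi> x = y" using im by auto
      then have "dZ (Inl x) (Inr y) = \<epsilon>/2" unfolding dZ_def using zB phB by auto
      then show "\<exists>x\<in>A. dZ (Inl x) (Inr y) < \<epsilon>" using \<open>x\<in>A\<close> ep by force
    qed
  qed
qed


lemma dense_core:
  assumes inf: "infinite (UNIV::'a set)"
  shows "\<And>B (e::'b\<Rightarrow>'b\<Rightarrow>real) \<delta>. ultrametric B e \<Longrightarrow> finite B \<Longrightarrow> B \<noteq> {} \<Longrightarrow> card B \<le> Suc k \<Longrightarrow> \<delta> > 0 \<Longrightarrow>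
     \<exists>(A::'a set) d \<phi>. finite A \<and> card A = Suc k \<and> ultrametric A d \<and> k \<le> card (Sp A d) \<and> \<phi> ` A = B
       \<and> (\<forall>x\<in>A. \<forall>y\<in>A. e (\<phi> x) (\<phi> y) \<le> d x y \<and> d x y \<le> e (\<phi> x) (\<phi> y) + \<delta>)"
proof (induction k)
  case 0
  obtain b where bB: "b \<in> B" using 0(3) by auto
  have "\<forall>a1\<in>B. \<forall>a2\<in>B. a1 = a2" using card_le_Suc0_iff_eq[OF 0(2)] 0(4) by simp
  then have b: "B = {b}" using bB by auto
  have eb: "e b b = 0" using Metric_space.zero[OF ultra_metric[OF 0(1)]] b by auto
  define a :: 'a where "a = undefined"
  have M: "Metric_space {a} (\<lambda>_ _. 0)" by unfold_locales auto
  have U: "ultrametric {a} (\<lambda>_ _. 0)" unfolding ultrametric_def using M by auto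
  show ?case
    by (rule exI[of _ "{a}"], rule exI[of _ "\<lambda>_ _. 0"], rule exI[of _ "\<lambda>_. b"]) (use U b eb 0(5) in auto)
next
  case (Suc k)
  note UB = Suc.prems(1) and finB = Suc.prems(2) and neB = Suc.prems(3) and cB = Suc.prems(4) and dp = Suc.prems(5)
  have MB: "Metric_space B e" using UB ultra_metric by auto
  have comB: "\<And>x y. e x y = e y x" using Metric_space.commute[OF MB] by auto
  obtain b' where b': "b' \<in> B" using neB by auto
  define B' where "B' = (if card B = Suc (Suc k) then B - {b'} else B)"
  have B'B: "B' \<subseteq> B" unfolding B'_def by auto
  have finB': "finite B'" using B'B finB finite_subset by auto
  have cB': "card B' \<le> Suc k" unfolding B'_def using cB finB b' by (auto simp: card_Diff_singleton)
  have neB': "B' \<noteq> {}"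
  proof
    assume "B' = {}"
    then have "card B = Suc (Suc k)" "B - {b'} = {}" unfolding B'_def using neB by (auto split: if_splits)
    then show False using b' finB by (metis card_Diff_singleton diff_Suc_1 card_0_eq finite_Diff nat.distinct(1))
  qed
  have insB': "insert b' B' = B" unfolding B'_def using b' by auto
  obtain A' :: "'a set" and d \<phi> where A': "finite A'" "card A' = Suc k" "ultrametric A' d" "k \<le> card (Sp A' d)" "\<phi> ` A' = B'"
    and bd: "\<forall>x\<in>A'. \<forall>y\<in>A'. e (\<phi> x) (\<phi> y) \<le> d x y \<and> d x y \<le> e (\<phi> x) (\<phi> y) + \<delta>"
    using Suc.IH[OF ultra_sub[OF UB B'B] finB' neB' cB' dp] by blast
  define r where "r = Min (e b' ` B')"
  have "r \<in> e b' ` B'" unfolding r_def using finB' neB' by auto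
  then obtain b where b: "b \<in> B'" "e b' b = r" by auto
  have rmin: "\<And>y. y \<in> B' \<Longrightarrow> r \<le> e b' y" unfolding r_def using finB' by auto
  have r0: "0 \<le> r" using Metric_space.nonneg[OF MB] b by metis
  obtain q where q: "q \<in> A'" "\<phi> q = b" using A'(5) b by auto
  have "infinite ({r<..r+\<delta>} - Sp A' d)" using dp Sp_finite[OF A'(1)] by auto
  then obtain c where c: "c \<in> {r<..r+\<delta>}" "c \<notin> Sp A' d" by (metis Diff_iff finite.emptyI infinite_imp_nonempty ex_in_conv)
  have c0: "c > 0" using c r0 by auto
  obtain p where p: "p \<notin> A'" using ex_new_if_finite[OF inf A'(1)] by auto
  define d' where "d' = (\<lambda>x y. if x = p \<and> y = p then 0 else if x = p then max (d q y) c
                      else if y = p then max (d q x) c else d x y)"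
  note ext = extend[OF A'(3) q(1) p c0 d'_def]
  define \<psi> where "\<psi> = \<phi>(p := b')"
  have keyl: "e b (\<phi> y) \<le> e b' (\<phi> y)" if "y \<in> A'" for y
  proof -
    have "\<phi> y \<in> B'" using that A'(5) by auto
    then have "r \<le> e b' (\<phi> y)" using rmin by auto
    moreover have "e b (\<phi> y) \<le> max (e b b') (e b' (\<phi> y))"
      using ultra_le'[OF UB] b B'B b' \<open>\<phi> y \<in> B'\<close> by auto
    ultimately show ?thesis using b comB by (auto simp: max_def split: if_splits)
  qed
  have keyu: "e b' (\<phi> y) \<le> max (e b' b) (e b (\<phi> y))" if "y \<in> A'" for y
  proof -
    have "\<phi> y \<in> B" "b \<in> B" using that A'(5) B'B b by auto
    then show ?thesis using ultra_le'[OF UB b' \<open>\<phi> y \<in> B\<close> \<open>b \<in> B\<close>] by simp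
  qed
  have pb: "e b' (\<phi> y) \<le> d' p y \<and> d' p y \<le> e b' (\<phi> y) + \<delta>" if "y \<in> A'" for y
  proof -
    have 1: "d' p y = max (d q y) c" using ext(3) that by auto
    have 2: "e b (\<phi> y) \<le> d q y" "d q y \<le> e b (\<phi> y) + \<delta>" using bd q that by auto
    have 3: "r \<le> e b' (\<phi> y)" using rmin that A'(5) by auto
    show ?thesis using 1 2 3 keyl[OF that] keyu[OF that] b c by (auto simp: max_def split: if_splits)
  qed
  have eb'0: "e b' b' = 0" using Metric_space.zero[OF MB] b' by auto
  show ?case
  proof (intro exI conjI)
    show "finite (insert p A')" using A'(1) by auto
    show "card (insert p A') = Suc (Suc k)" using A' p by auto
    show "ultrametric (insert p A') d'" by (rule ext(1))
    have "card (insert c (Sp A' d)) \<le> card (Sp (insert p A') d')"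
      by (rule card_mono) (use ext(2) Sp_finite[of "insert p A'" d'] A'(1) in auto)
    then show "Suc k \<le> card (Sp (insert p A') d')" using c(2) Sp_finite[OF A'(1)] A'(4) by auto
    have "\<psi> ` A' = \<phi> ` A'" unfolding \<psi>_def using p by (intro image_cong) auto
    moreover have "\<psi> p = b'" unfolding \<psi>_def by simp
    ultimately show "\<psi> ` insert p A' = B" using A'(5) insB' by simp
    show "\<forall>x\<in>insert p A'. \<forall>y\<in>insert p A'. e (\<psi> x) (\<psi> y) \<le> d' x y \<and> d' x y \<le> e (\<psi> x) (\<psi> y) + \<delta>"
    proof (intro ballI)
      fix x y assume x: "x \<in> insert p A'" and y: "y \<in> insert p A'"
      have psi: "\<And>z. z \<in> A' \<Longrightarrow> \<psi> z = \<phi> z" "\<psi> p = b'" unfolding \<psi>_def using p by auto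
      have dpp: "d' p p = 0" unfolding d'_def by simp
      have comd: "\<And>u v. d' u v = d' v u"
        using Metric_space.commute[OF ultra_metric[OF ext(1)]] by auto
      show "e (\<psi> x) (\<psi> y) \<le> d' x y \<and> d' x y \<le> e (\<psi> x) (\<psi> y) + \<delta>"
      proof (cases "x = p"; cases "y = p")
        assume "x = p" "y = p" then show ?thesis using psi dpp eb'0 dp by simp
      next
        assume "x = p" "y \<noteq> p" then show ?thesis using psi pb y by auto
      next
        assume "x \<noteq> p" "y = p" then show ?thesis using psi pb[of x] x comd[of x p] comB[of "\<phi> x" b'] by auto
      next
        assume "x \<noteq> p" "y \<noteq> p" then show ?thesis using psi bd x y ext(5) by auto
      qed
    qed
  qed
qed


lemma gap_exists:
  assumes "finite (S::real set)"
  shows "\<exists>g>0. \<forall>s\<in>S. \<forall>t\<in>S. s \<noteq> t \<longrightarrow> g \<le> \<bar>s - t\<bar>"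
proof -
  define D where "D = insert 1 ((\<lambda>(s,t). \<bar>s - t\<bar>) ` {(s,t). s \<in> S \<and> t \<in> S \<and> s \<noteq> t})"
  have fD: "finite D" unfolding D_def using assms
    by (auto intro: finite_subset[of _ "S \<times> S"])
  have pos: "\<forall>x\<in>D. x > 0" unfolding D_def by auto
  have "Min D > 0" using fD pos by (simp add: D_def)
  moreover have "\<forall>s\<in>S. \<forall>t\<in>S. s \<noteq> t \<longrightarrow> Min D \<le> \<bar>s - t\<bar>"
    using fD unfolding D_def by (auto intro!: Min_le)
  ultimately show ?thesis by blast
qed

lemma open_part:
  assumes cA: "classU A d" and n: "card A = n"
  shows "\<exists>\<epsilon>>0. \<forall>(B :: 'b set) e. ultra_le n B e \<and> gh_less A d B e \<epsilon> \<longrightarrow> classU B e \<and> card B = n"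
proof -
  have finA: "finite A" and UA: "ultrametric A d" and spA: "card (Sp A d) = card A - 1"
    using cA unfolding classU_def by auto
  have MA: "Metric_space A d" using UA ultra_metric by auto
  define S where "S = insert 0 (Sp A d)"
  obtain g where g: "g > 0" "\<forall>s\<in>S. \<forall>t\<in>S. s \<noteq> t \<longrightarrow> g \<le> \<bar>s - t\<bar>"
    using gap_exists[of S] Sp_finite[OF finA] unfolding S_def by auto
  show ?thesis
  proof (intro exI[of _ "g/4"] conjI allI impI)
    show "g/4 > 0" using g by auto
    fix B :: "'b set" and e
    assume h: "ultra_le n B e \<and> gh_less A d B e (g/4)"
    have finB: "finite B" and UB: "ultrametric B e" and cB: "card B \<le> n" and neB: "B \<noteq> {}"
      using h unfolding ultra_le_def by auto
    have MB: "Metric_space B e" using UB ultra_metric by auto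
    obtain Z :: "('a + 'b) set" and dZ f gg where MZ: "Metric_space Z dZ" and fZ: "f ` A \<subseteq> Z" and gZ: "gg ` B \<subseteq> Z"
      and fd: "\<forall>x\<in>A. \<forall>y\<in>A. dZ (f x) (f y) = d x y" and ge: "\<forall>x\<in>B. \<forall>y\<in>B. dZ (gg x) (gg y) = e x y"
      and cl: "\<forall>x\<in>A. \<exists>y\<in>B. dZ (f x) (gg y) < g/4"
      using h unfolding gh_less_def by blast
    obtain \<psi> where psi: "\<forall>x\<in>A. \<psi> x \<in> B \<and> dZ (f x) (gg (\<psi> x)) < g/4"
      using cl by metis
    have comZ: "\<And>x y. dZ x y = dZ y x" using Metric_space.commute[OF MZ] by auto
    have trZ: "\<And>x y z. x\<in>Z \<Longrightarrow> y\<in>Z \<Longrightarrow> z\<in>Z \<Longrightarrow> dZ x z \<le> dZ x y + dZ y z"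
      using Metric_space.triangle[OF MZ] by auto
    have close: "\<bar>d x y - e (\<psi> x) (\<psi> y)\<bar> < g/2" if xy: "x \<in> A" "y \<in> A" for x y
    proof -
      have Z: "f x \<in> Z" "f y \<in> Z" "gg (\<psi> x) \<in> Z" "gg (\<psi> y) \<in> Z" using fZ gZ psi xy by auto
      have 1: "dZ (f x) (f y) \<le> dZ (f x) (gg (\<psi> x)) + dZ (gg (\<psi> x)) (gg (\<psi> y)) + dZ (gg (\<psi> y)) (f y)"
        using trZ[OF Z(1) Z(3) Z(2)] trZ[OF Z(3) Z(4) Z(2)] by linarith
      have 2: "dZ (gg (\<psi> x)) (gg (\<psi> y)) \<le> dZ (gg (\<psi> x)) (f x) + dZ (f x) (f y) + dZ (f y) (gg (\<psi> y))"
        using trZ[OF Z(3) Z(1) Z(4)] trZ[OF Z(1) Z(2) Z(4)] by linarith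
      have 3: "dZ (f x) (gg (\<psi> x)) < g/4" "dZ (f y) (gg (\<psi> y)) < g/4" using psi xy by auto
      have 4: "dZ (f x) (f y) = d x y" "dZ (gg (\<psi> x)) (gg (\<psi> y)) = e (\<psi> x) (\<psi> y)"
        using fd ge psi xy by auto
      show ?thesis using 1 2 3 4 comZ[of "gg (\<psi> y)" "f y"] comZ[of "gg (\<psi> x)" "f x"] by linarith
    qed
    have dbig: "g \<le> d x y" if "x \<in> A" "y \<in> A" "x \<noteq> y" for x y
    proof -
      have "d x y \<in> S" "0 \<in> S" unfolding S_def Sp_def using that by auto
      moreover have "d x y \<noteq> 0" using Metric_space.zero[OF MA] that by auto
      ultimately have "g \<le> \<bar>d x y - 0\<bar>" using g by blast
      then show ?thesis using Metric_space.nonneg[OF MA, of x y] by simp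
    qed
    have inj: "inj_on \<psi> A"
    proof (rule inj_onI, rule ccontr)
      fix x y assume xy: "x \<in> A" "y \<in> A" "\<psi> x = \<psi> y" "x \<noteq> y"
      have "e (\<psi> x) (\<psi> y) = 0" using Metric_space.zero[OF MB] psi xy by auto
      then show False using close[OF xy(1,2)] dbig[OF xy(1,2,4)] g by auto
    qed
    have "card A \<le> card B" using card_inj_on_le[OF inj _ finB] psi by auto
    then have cBn: "card B = n" using cB n by auto
    define h where "h s = (SOME t. t \<in> Sp B e \<and> \<bar>s - t\<bar> < g/2)" for s
    have hprop: "h s \<in> Sp B e \<and> \<bar>s - h s\<bar> < g/2" if sS: "s \<in> Sp A d" for s
    proof -
      obtain x y where xy: "x \<in> A" "y \<in> A" "x \<noteq> y" "s = d x y" using sS unfolding Sp_def by auto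
      have "\<psi> x \<noteq> \<psi> y" using inj xy by (auto dest: inj_onD)
      then have "e (\<psi> x) (\<psi> y) \<in> Sp B e" using psi xy unfolding Sp_def by auto
      moreover have "\<bar>s - e (\<psi> x) (\<psi> y)\<bar> < g/2" using close xy by auto
      ultimately have "\<exists>t. t \<in> Sp B e \<and> \<bar>s - t\<bar> < g/2" by blast
      then show ?thesis unfolding h_def by (rule someI_ex)
    qed
    have "inj_on h (Sp A d)"
    proof (rule inj_onI, rule ccontr)
      fix s t assume st: "s \<in> Sp A d" "t \<in> Sp A d" "h s = h t" "s \<noteq> t"
      have "g \<le> \<bar>s - t\<bar>" using g st unfolding S_def by auto
      then show False using hprop[OF st(1)] hprop[OF st(2)] st(3) by linarith
    qed
    then have "card (Sp A d) \<le> card (Sp B e)" using card_inj_on_le Sp_finite[OF finB] hprop by blast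
    moreover have "card (Sp B e) \<le> card B - 1" using Sp_bound[OF UB finB] .
    ultimately have "card (Sp B e) = card B - 1" using spA n cBn by auto
    then show "classU B e" unfolding classU_def using finB neB UB cBn by auto
    show "card B = n" by (rule cBn)
  qed
qed

theorem mainTheorem17:
  fixes n :: nat
  assumes "n \<ge> 1" and "infinite (UNIV :: 'a set)"
  shows "(\<forall>(A :: 'a set) d. classU A d \<and> card A = n \<longrightarrow>
            (\<exists>\<epsilon>>0. \<forall>(B :: 'a set) e. ultra_le n B e \<and> gh_less A d B e \<epsilon> \<longrightarrow>
                       classU B e \<and> card B = n))
       \<and> (\<forall>(B :: 'a set) e \<epsilon>. ultra_le n B e \<and> \<epsilon> > 0 \<longrightarrow>
            (\<exists>(A :: 'a set) d. classU A d \<and> card A = n \<and> gh_less A d B e \<epsilon>))"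
proof (intro conjI allI impI)
  fix A :: "'a set" and d assume "classU A d \<and> card A = n"
  then show "\<exists>\<epsilon>>0. \<forall>(B :: 'a set) e. ultra_le n B e \<and> gh_less A d B e \<epsilon> \<longrightarrow> classU B e \<and> card B = n"
    using open_part by blast
next
  fix B :: "'a set" and e :: "'a \<Rightarrow> 'a \<Rightarrow> real" and \<epsilon> :: real assume h: "ultra_le n B e \<and> \<epsilon> > 0"
  obtain k where k: "n = Suc k" using assms(1) by (cases n) auto
  have finB: "finite B" and UB: "ultrametric B e" and cB: "card B \<le> Suc k" and neB: "B \<noteq> {}"
    using h k unfolding ultra_le_def by auto
  obtain A :: "'a set" and d \<phi> where A: "finite A" "card A = Suc k" "ultrametric A d" "k \<le> card (Sp A d)" "\<phi> ` A = B"
    and bd: "\<forall>x\<in>A. \<forall>y\<in>A. e (\<phi> x) (\<phi> y) \<le> d x y \<and> d x y \<le> e (\<phi> x) (\<phi> y) + \<epsilon>"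
    using dense_core[OF assms(2) UB finB neB cB, of \<epsilon>] h by blast
  have "card (Sp A d) = card A - 1" using Sp_bound[OF A(3) A(1)] A(2,4) by auto
  then have "classU A d" unfolding classU_def using A by auto
  moreover have "gh_less A d B e \<epsilon>"
    using gh_from_map[OF ultra_metric[OF A(3)] ultra_metric[OF UB] A(5) bd] h by auto
  ultimately show "\<exists>(A :: 'a set) d. classU A d \<and> card A = n \<and> gh_less A d B e \<epsilon>"
    using A(2) k by blast
qed

end
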